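(* Let $\mu\in\mathbb{R}$, $\alpha>0$ and $y\in\mathbb{R}$ with $|y|\ge2|\mu|$. Then there is a unique $x_y\in\mathbb{R}$ with $x_y=\mu\log|x_y+iy|-\log\alpha$. Moreover, if $x>x_y$ then $x>\mu\log|x+iy|-\log\alpha$, and if $x<x_y$ then $x<\mu\log|x+iy|-\log\alpha$. *)

theory Defs
  imports "HOL-Analysis.Analysis"
begin

end

theory Submission
  imports Defs
begin

lemma mono_aux:
  fixes \<mu> y c a b :: real
  assumes "y \<noteq> 0" "\<bar>y\<bar> \<ge> 2 * \<bar>\<mu>\<bar>" "c \<le> 1/2" "a < b"
  shows "(1-c)*a - \<mu>/2 * ln (a^2+y^2) < (1-c)*b - \<mu>/2 * ln (b^2+y^2)"
proof (rule DERIV_pos_imp_increasing[OF assms(4)])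
  fix x :: real assume "a \<le> x" "x \<le> b"
  have p: "x^2+y^2 > 0" using assms(1) by (simp add: add_nonneg_pos)
  have d: "((\<lambda>x. (1-c)*x - \<mu>/2 * ln (x^2+y^2)) has_real_derivative
      ((1-c) - \<mu>/2 * ((2*x) / (x^2+y^2)))) (at x)"
    using p by (auto intro!: derivative_eq_intros simp: field_simps)
  have "\<bar>\<mu> * x\<bar> \<le> \<bar>y\<bar> * \<bar>x\<bar> / 2"
    using mult_right_mono[OF assms(2) abs_ge_zero[of x]] by (simp add: abs_mult)
  also have "\<dots> \<le> (x^2+y^2)/4"
  proof -
    have "0 \<le> (\<bar>x\<bar> - \<bar>y\<bar>)^2" by simp
    hence "2*\<bar>x\<bar>*\<bar>y\<bar> \<le> x^2+y^2" unfolding power2_diff by simp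
    thus ?thesis by (simp add: mult_ac)
  qed
  finally have "\<bar>\<mu> * x\<bar> \<le> (x^2+y^2)/4" .
  hence "\<mu> * x / (x^2+y^2) \<le> 1/4" using p by (simp add: divide_le_eq abs_le_iff)
  moreover have "\<mu>/2 * ((2*x) / (x^2+y^2)) = \<mu> * x / (x^2+y^2)" by simp
  ultimately have "(1-c) - \<mu>/2 * ((2*x) / (x^2+y^2)) > 0" using assms(3) by linarith
  thus "\<exists>D. ((\<lambda>x. (1-c)*x - \<mu>/2 * ln (x^2+y^2)) has_real_derivative D) (at x) \<and> 0 < D"
    using d by blast
qed

theorem lemma5p1:
  fixes \<mu> \<alpha> y :: real
  assumes "\<alpha> > 0" and "\<bar>y\<bar> \<ge> 2 * \<bar>\<mu>\<bar>"
  shows "(\<exists>!xy::real. xy = \<mu> * ln (cmod (Complex xy y)) - ln \<alpha>) \<and>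
         (\<forall>xy::real. xy = \<mu> * ln (cmod (Complex xy y)) - ln \<alpha> \<longrightarrow>
           (\<forall>x::real. x > xy \<longrightarrow> x > \<mu> * ln (cmod (Complex x y)) - ln \<alpha>) \<and>
           (\<forall>x::real. x < xy \<longrightarrow> x < \<mu> * ln (cmod (Complex x y)) - ln \<alpha>))"
proof (cases "y = 0")
  case True
  then have "\<mu> = 0" using assms(2) by simp
  then show ?thesis by auto
next
  case False
  define g where "g x = x - \<mu>/2 * ln (x^2+y^2) + ln \<alpha>" for x
  have eq: "\<mu> * ln (cmod (Complex x y)) - ln \<alpha> = x - g x" for x
  proof -
    have "x^2+y^2 > 0" using False by (simp add: add_nonneg_pos)
    thus ?thesis by (simp add: g_def complex_norm ln_sqrt)
  qed
  have mono: "a < b \<Longrightarrow> g a < g b" for a b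
    using mono_aux[OF False assms(2), of 0 a b] by (simp add: g_def)
  have mono2: "a < b \<Longrightarrow> g a - a/2 < g b - b/2" for a b
    using mono_aux[OF False assms(2), of "1/2" a b] by (simp add: g_def algebra_simps)
  define M where "M = 2 * \<bar>g 0\<bar> + 2"
  have Mp: "M > 0" unfolding M_def by simp
  have "g 0 - 0/2 < g M - M/2" using mono2[OF Mp] .
  moreover have "M/2 = \<bar>g 0\<bar> + 1" unfolding M_def by simp
  ultimately have gM: "g M > 0" using abs_ge_minus_self[of "g 0"] by linarith
  have "g (-M) - (-M)/2 < g 0 - 0/2" using mono2[of "-M" 0] Mp by simp
  moreover have "M/2 = \<bar>g 0\<bar> + 1" unfolding M_def by simp
  ultimately have gm: "g (-M) < 0" using abs_ge_self[of "g 0"] by linarith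
  have cont: "continuous_on {-M..M} g"
    unfolding g_def using False
    by (intro continuous_intros) (auto simp: add_nonneg_pos)
  obtain z where z: "g z = 0"
    using IVT'[of g "-M" 0 M] gM gm Mp cont by auto
  have uniq: "g w = 0 \<Longrightarrow> w = z" for w
    using mono[of w z] mono[of z w] z by (cases w z rule: linorder_cases) auto
  show ?thesis
    unfolding eq
  proof (intro conjI allI impI)
    show "\<exists>!xy. xy = xy - g xy" using z uniq by auto
  next
    fix xy x assume "xy = xy - g xy" "xy < x"
    thus "x - g x < x" using mono[of xy x] by auto
  next
    fix xy x assume "xy = xy - g xy" "x < xy"
    thus "x < x - g x" using mono[of x xy] by auto
  qed
qed

end
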